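(* Let $b\ge 2$ be even and $n\ge 1$. Then $\{b^{n+i}+1 : i\in\{0,1,\dots,n\}\}$ is the minimal system of generators of $SC^{+}(b,n)$; in particular $e(SC^{+}(b,n))=n+1$.
   Context: For an even integer $b\ge2$ and $n\ge0$, $SC^{+}(b,n)=\langle\{b^{n+i}+1: i\in\mathbb{N}\}\rangle$, the submonoid of $(\mathbb{N},+)$ generated by these numbers (a numerical semigroup). The minimal system of generators of a numerical semigroup $S$ is the unique generating set no proper subset of which generates $S$; $e(S)$ is its cardinality. *)

theory Defs
  imports Main
begin

inductive_set monoid_gen :: "nat set \<Rightarrow> nat set" for A :: "nat set" where
  zero: "0 \<in> monoid_gen A"
| add: "a \<in> A \<Longrightarrow> x \<in> monoid_gen A \<Longrightarrow> a + x \<in> monoid_gen A"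

definition SCplus :: "nat \<Rightarrow> nat \<Rightarrow> nat set" where
  "SCplus b n = monoid_gen {b ^ (n + i) + 1 | i. True}"

definition is_minimal_generating_system :: "nat set \<Rightarrow> nat set \<Rightarrow> bool" where
  "is_minimal_generating_system G S \<longleftrightarrow>
     monoid_gen G = S \<and> (\<forall>H. H \<subset> G \<longrightarrow> monoid_gen H \<noteq> S)"

definition embedding_dim :: "nat set \<Rightarrow> nat" where
  "embedding_dim S = card (THE G. is_minimal_generating_system G S)"

end

theory Submission
  imports Defs "HOL-Number_Theory.Cong"
begin

lemma mg_add: "x \<in> monoid_gen A \<Longrightarrow> y \<in> monoid_gen A \<Longrightarrow> x + y \<in> monoid_gen A"
  by (induction x rule: monoid_gen.induct) (auto simp: add.assoc intro: monoid_gen.add)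

lemma mg_gen: "a \<in> A \<Longrightarrow> a \<in> monoid_gen A"
  using monoid_gen.add[OF _ monoid_gen.zero] by simp

lemma mg_mult: "a \<in> A \<Longrightarrow> k * a \<in> monoid_gen A"
  by (induction k) (auto intro: monoid_gen.zero mg_add mg_gen)

lemma mg_sub: "A \<subseteq> monoid_gen B \<Longrightarrow> monoid_gen A \<subseteq> monoid_gen B"
proof
  fix x assume A: "A \<subseteq> monoid_gen B" and x: "x \<in> monoid_gen A"
  from x show "x \<in> monoid_gen B"
    by (induction x rule: monoid_gen.induct) (use A in \<open>auto intro: monoid_gen.zero mg_add\<close>)
qed

lemma mg_mono: "A \<subseteq> B \<Longrightarrow> monoid_gen A \<subseteq> monoid_gen B"
  by (rule mg_sub) (auto intro: mg_gen)

lemma mg_less: "s \<in> monoid_gen G \<Longrightarrow> s < g \<Longrightarrow> s \<in> monoid_gen (G - {g})"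
  by (induction s rule: monoid_gen.induct) (auto intro: monoid_gen.zero monoid_gen.add)

definition atoms :: "nat set \<Rightarrow> nat set" where
  "atoms S = {s \<in> S. s \<noteq> 0 \<and> \<not>(\<exists>x y. x \<in> S \<and> y \<in> S \<and> x \<noteq> 0 \<and> y \<noteq> 0 \<and> s = x + y)}"

lemma minimal_atoms:
  assumes "is_minimal_generating_system G S"
  shows "G = atoms S"
proof -
  have S: "monoid_gen G = S" and mn: "\<And>H. H \<subset> G \<Longrightarrow> monoid_gen H \<noteq> S"
    using assms unfolding is_minimal_generating_system_def by auto
  have key: "g \<notin> monoid_gen (G - {g})" if "g \<in> G" for g
  proof
    assume "g \<in> monoid_gen (G - {g})"
    then have "G \<subseteq> monoid_gen (G - {g})" by (auto intro: mg_gen)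
    then have "monoid_gen G \<subseteq> monoid_gen (G - {g})" by (rule mg_sub)
    moreover have "monoid_gen (G - {g}) \<subseteq> monoid_gen G" by (rule mg_mono) auto
    ultimately have "monoid_gen (G - {g}) = S" using S by auto
    moreover have "G - {g} \<subset> G" using that by auto
    ultimately show False using mn by blast
  qed
  have z: "0 \<notin> G" using key monoid_gen.zero by blast
  show ?thesis
  proof
    show "G \<subseteq> atoms S"
    proof
      fix g assume g: "g \<in> G"
      have "g \<in> S" using S g mg_gen by blast
      moreover have "g \<noteq> 0" using z g by metis
      moreover have "\<not>(\<exists>x y. x \<in> S \<and> y \<in> S \<and> x \<noteq> 0 \<and> y \<noteq> 0 \<and> g = x + y)"
      proof
        assume "\<exists>x y. x \<in> S \<and> y \<in> S \<and> x \<noteq> 0 \<and> y \<noteq> 0 \<and> g = x + y"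
        then obtain x y where xy: "x \<in> S" "y \<in> S" "x \<noteq> 0" "y \<noteq> 0" "g = x + y" by blast
        have "x \<in> monoid_gen (G - {g})" using xy S mg_less by auto
        moreover have "y \<in> monoid_gen (G - {g})" using xy S mg_less by auto
        ultimately have "g \<in> monoid_gen (G - {g})" using xy mg_add by auto
        then show False using key g by blast
      qed
      ultimately show "g \<in> atoms S" unfolding atoms_def by blast
    qed
  next
    show "atoms S \<subseteq> G"
    proof
      fix s assume "s \<in> atoms S"
      then have s: "s \<in> monoid_gen G" "s \<noteq> 0"
        and nd: "\<not>(\<exists>x y. x \<in> S \<and> y \<in> S \<and> x \<noteq> 0 \<and> y \<noteq> 0 \<and> s = x + y)"
        unfolding atoms_def using S by auto
      from s show "s \<in> G"
      proof cases
        case zero then show ?thesis using s by auto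
      next
        case (add a x)
        have "a \<in> S" using S mg_gen add by auto
        moreover have "a \<noteq> 0" using z add by metis
        ultimately have "x = 0" using nd add S by blast
        then show ?thesis using add by simp
      qed
    qed
  qed
qed

lemma sylv:
  fixes a c N :: nat
  assumes "coprime a c" "c > 0" "a > 0" "(a - 1) * (c - 1) \<le> N"
  shows "\<exists>u v. N = u * a + v * c"
proof -
  have "gcd a c dvd N" using assms(1) by simp
  then obtain x where x: "[a * x = N] (mod c)" using cong_solve_dvd_nat by blast
  define u where "u = x mod c"
  have cu: "[u * a = N] (mod c)" using x unfolding u_def cong_def
    by (metis mod_mult_right_eq mult.commute)
  have uc: "u < c" using assms(2) u_def by simp
  have e: "(c - 1) * a = (a - 1) * (c - 1) + (c - 1)" using assms(3) by (cases a) auto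
  have le: "u * a \<le> (c - 1) * a" using uc by (intro mult_le_mono1) simp
  have "u * a \<le> N"
  proof (rule ccontr)
    assume "\<not> u * a \<le> N"
    then have "N \<le> u * a" "N \<noteq> u*a" by auto
    then obtain q where q: "u * a = q * c + N" using cu cong_le_nat by blast
    then have "q \<noteq> 0" using \<open>N \<noteq> u*a\<close> by auto
    then have "q * c \<ge> c" by simp
    then show False using q le e assms(4) assms(2) by linarith
  qed
  then obtain q where "N = q * c + u * a" using cu cong_le_nat cong_sym by blast
  then have "N = u * a + q * c" by simp
  then show ?thesis by blast
qed

lemma cop:
  fixes b n :: nat
  assumes "even b" "b \<ge> 2" "n \<ge> 1"
  shows "coprime (b ^ n + 1) (b ^ (n + 1) + 1)"
proof -
  define d where "d = gcd (b ^ n + 1) (b ^ (n + 1) + 1)"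
  have d1: "d dvd b ^ n + 1" "d dvd b ^ (n+1) + 1" unfolding d_def by auto
  have "d dvd b * (b ^ n + 1)" using dvd_mult[OF d1(1), of b] by blast
  then have "d dvd b ^ (n+1) + b" by (simp add: algebra_simps)
  then have "d dvd (b ^ (n+1) + b) - (b ^ (n+1) + 1)" using d1 dvd_diff_nat by blast
  then have "d dvd b - 1" by simp
  then have "[b = 1] (mod d)" using assms(2) by (simp add: cong_altdef_nat cong_sym_eq)
  then have "[b ^ n = 1 ^ n] (mod d)" by (rule cong_pow)
  then have "[b ^ n = 1] (mod d)" by simp
  then have "[b ^ n + 1 = 1 + 1] (mod d)" by (rule cong_add) (rule cong_refl)
  then have "[b ^ n + 1 = 2] (mod d)" by (simp add: numeral_2_eq_2)
  then have "d dvd 2" using d1(1) cong_dvd_iff by blast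
  then have "d \<le> 2" by (rule dvd_imp_le) simp
  moreover have "odd d"
  proof -
    have "odd (b ^ n + 1)" using assms by simp
    then show "odd d" using d1(1) by (meson dvd_trans)
  qed
  moreover have "d \<noteq> 0" using \<open>odd d\<close> by (metis even_zero)
  ultimately have "d = 1" by presburger
  then show ?thesis unfolding d_def by (simp add: coprime_iff_gcd_eq_1)
qed

lemma modh: "(M::nat) \<ge> 2 \<Longrightarrow> (M * k + 1) mod M = 1"
proof -
  assume a: "M \<ge> 2"
  have "(M * k + 1) mod M = 1 mod M" by (metis add.commute mod_mult_self2 mult.commute)
  also have "\<dots> = 1" using a by simp
  finally show ?thesis .
qed

lemma inv:
  fixes M :: nat
  assumes "M \<ge> 2" "\<forall>a\<in>A. a mod M = 1 \<and> a \<ge> M + 1" "s \<in> monoid_gen A"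
  shows "\<exists>C. s mod M = C mod M \<and> s \<ge> C * (M + 1) \<and> (C = 0 \<longrightarrow> s = 0) \<and> (C = 1 \<longrightarrow> s \<in> A)"
  using assms(3)
proof (induction s rule: monoid_gen.induct)
  case zero
  show ?case by (intro exI[of _ 0]) simp
next
  case (add a x)
  then obtain C where C: "x mod M = C mod M" "x \<ge> C * (M + 1)" "C = 0 \<longrightarrow> x = 0" "C = 1 \<longrightarrow> x \<in> A"
    by blast
  have a: "a mod M = 1" "a \<ge> M + 1" using assms(2) add(1) by auto
  have "(a + x) mod M = (a mod M + x mod M) mod M" by (simp add: mod_add_eq)
  also have "\<dots> = (1 mod M + C mod M) mod M" using a C assms(1) by simp
  also have "\<dots> = (C + 1) mod M" by (metis mod_add_eq add.commute)
  finally have m: "(a + x) mod M = (C + 1) mod M" .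
  have "a + x \<ge> (C + 1) * (M + 1)" using a C by simp
  moreover have "C + 1 = 1 \<longrightarrow> a + x \<in> A" using C add(1) by auto
  ultimately show ?case using m by (intro exI[of _ "C + 1"]) simp
qed

lemma notin:
  fixes b n j :: nat
  assumes "b \<ge> 2" "n \<ge> 1" "j \<le> n" "A \<subseteq> {b ^ (n + i) + 1 | i. True}"
    "b ^ (n + j) + 1 \<in> monoid_gen A"
  shows "b ^ (n + j) + 1 \<in> A"
proof -
  define M where "M = b ^ n"
  have "b ^ 1 \<le> b ^ n" by (rule power_increasing) (use assms in auto)
  then have M2: "M \<ge> 2" unfolding M_def using assms(1) by simp
  have gA: "\<forall>a\<in>A. a mod M = 1 \<and> a \<ge> M + 1"
  proof
    fix a assume "a \<in> A"
    then obtain i where i: "a = b ^ (n + i) + 1" using assms(4) by auto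
    have e: "b ^ (n + i) = M * b ^ i" unfolding M_def by (simp add: power_add)
    have "b ^ i \<ge> 1" using assms(1) by simp
    then have "M * b ^ i \<ge> M" by simp
    moreover have "(M * b ^ i + 1) mod M = 1" using M2 by (rule modh)
    ultimately show "a mod M = 1 \<and> a \<ge> M + 1" using i e by simp
  qed
  obtain C where C: "(b ^ (n + j) + 1) mod M = C mod M" "b ^ (n + j) + 1 \<ge> C * (M + 1)"
      "C = 0 \<longrightarrow> b ^ (n + j) + 1 = 0" "C = 1 \<longrightarrow> b ^ (n + j) + 1 \<in> A"
    using inv[OF M2 gA assms(5)] by blast
  have e: "b ^ (n + j) = M * b ^ j" unfolding M_def by (simp add: power_add)
  have "(M * b ^ j + 1) mod M = 1" using M2 by (rule modh)
  then have Cm: "C mod M = 1" using C(1) e by simp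
  show ?thesis
  proof (rule ccontr)
    assume na: "b ^ (n + j) + 1 \<notin> A"
    then have "C \<noteq> 1" "C \<noteq> 0" using C by auto
    have "C = M * (C div M) + 1" using Cm by (metis mult_div_mod_eq)
    then have "C div M \<noteq> 0"
    proof (intro notI)
      assume "C div M = 0" "C = M * (C div M) + 1"
      then have "C = 1" by simp
      then show False using \<open>C \<noteq> 1\<close> by simp
    qed
    then have "M * (C div M) \<ge> M" by simp
    then have "C \<ge> M + 1" using \<open>C = M * (C div M) + 1\<close> by linarith
    then have f1: "C * (M + 1) \<ge> (M + 1) * (M + 1)" by (rule mult_le_mono1)
    have "b ^ j \<le> M" unfolding M_def using assms(1,3) by (simp add: power_increasing)
    then have f2: "M * b ^ j \<le> M * M" by simp
    have f3: "(M + 1) * (M + 1) = M * M + 2 * M + 1" by (simp add: algebra_simps)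
    show False using C(2) e f1 f2 f3 M2 by linarith
  qed
qed

theorem mainTheorem15:
  fixes b n :: nat
  assumes "even b" and "b \<ge> 2" and "n \<ge> 1"
  shows "is_minimal_generating_system {b ^ (n + i) + 1 | i. i \<in> {0..n}} (SCplus b n)
         \<and> embedding_dim (SCplus b n) = n + 1"
proof -
  define G0 where "G0 = {b ^ (n + i) + 1 | i. i \<in> {0..n}}"
  define gens where "gens = {b ^ (n + i) + 1 | i. (True::bool)}"
  have S: "SCplus b n = monoid_gen gens" unfolding SCplus_def gens_def by simp
  have G0g: "G0 \<subseteq> gens" unfolding G0_def gens_def by auto
  have aG: "b ^ n + 1 \<in> G0" unfolding G0_def by (intro CollectI exI[of _ 0]) simp
  have cG: "b ^ (n + 1) + 1 \<in> G0" unfolding G0_def using assms(3) by (intro CollectI exI[of _ 1]) simp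
  have cp: "coprime (b ^ n + 1) (b ^ (n + 1) + 1)" using cop assms by blast
  have "gens \<subseteq> monoid_gen G0"
  proof
    fix N assume "N \<in> gens"
    then obtain i where i: "N = b ^ (n + i) + 1" unfolding gens_def by auto
    show "N \<in> monoid_gen G0"
    proof (cases "i \<le> n")
      case True
      then have "N \<in> G0" unfolding G0_def using i by auto
      then show ?thesis by (rule mg_gen)
    next
      case False
      have "(b ^ n + 1 - 1) * (b ^ (n + 1) + 1 - 1) = b ^ (n + (n + 1))"
        by (simp add: power_add)
      also have "\<dots> \<le> b ^ (n + i)" using False assms(2) by (intro power_increasing) auto
      also have "\<dots> \<le> N" using i by simp
      finally have le: "(b ^ n + 1 - 1) * (b ^ (n + 1) + 1 - 1) \<le> N" .
      have "\<exists>u v. N = u * (b ^ n + 1) + v * (b ^ (n + 1) + 1)"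
        by (rule sylv[OF cp _ _ le]) simp_all
      then obtain u v where uv: "N = u * (b ^ n + 1) + v * (b ^ (n + 1) + 1)" by blast
      have "u * (b ^ n + 1) \<in> monoid_gen G0" by (rule mg_mult[OF aG])
      moreover have "v * (b ^ (n + 1) + 1) \<in> monoid_gen G0" by (rule mg_mult[OF cG])
      ultimately show ?thesis unfolding uv by (rule mg_add)
    qed
  qed
  then have "monoid_gen gens \<subseteq> monoid_gen G0" by (rule mg_sub)
  moreover have "monoid_gen G0 \<subseteq> monoid_gen gens" using G0g by (rule mg_mono)
  ultimately have eq: "monoid_gen G0 = SCplus b n" using S by auto
  have mn: "\<forall>H. H \<subset> G0 \<longrightarrow> monoid_gen H \<noteq> SCplus b n"
  proof (intro allI impI notI)
    fix H assume H: "H \<subset> G0" "monoid_gen H = SCplus b n"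
    then obtain g where g: "g \<in> G0" "g \<notin> H" by blast
    then obtain j where j: "g = b ^ (n + j) + 1" "j \<le> n" unfolding G0_def by auto
    have "g \<in> monoid_gen H" using H(2) eq g mg_gen by blast
    then have "g \<in> H" using notin[OF assms(2) assms(3) j(2), of H] H(1) G0g j(1)
      unfolding gens_def by blast
    then show False using g by blast
  qed
  have min: "is_minimal_generating_system G0 (SCplus b n)"
    unfolding is_minimal_generating_system_def using eq mn by blast
  have the: "(THE G. is_minimal_generating_system G (SCplus b n)) = G0"
    by (rule the_equality) (use min minimal_atoms in blast)+
  have img: "G0 = (\<lambda>i. b ^ (n + i) + 1) ` {0..n}" unfolding G0_def by auto
  have inj: "inj_on (\<lambda>i. b ^ (n + i) + 1) {0..n}"
    using assms(2) by (auto simp: inj_on_def)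
  have cd: "card G0 = n + 1" unfolding img card_image[OF inj] by simp
  have "is_minimal_generating_system G0 (SCplus b n) \<and> embedding_dim (SCplus b n) = n + 1"
    unfolding embedding_dim_def the cd using min by blast
  then show ?thesis unfolding G0_def .
qed

end
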